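(* Let $\mu$ be measurable with $\|\mu\|_\infty\leqslant1$ and $\operatorname{supp}\mu\subset A(\rho_0,\rho_1)$, where $0<\rho_0<\rho_1<1$. Let $\rho_1<r_1<1$ and $\varepsilon>0$. Then there exists a measurable $\tilde\mu$ such that: (i) $\operatorname{supp}\tilde\mu\subset A(\rho_0,r_1)$; (ii) $\|\tilde\mu-\mu\|_\infty<\varepsilon$; (iii) $\mathcal C\tilde\mu(0)=\mathcal C\mu(0)$; (iv) $\mathcal C\tilde\mu$ is, on $\{|z|>1\}$, a polynomial in $z^{-1}$.
   Context: $A(\rho,R)=\{\rho<|z|<R\}$. $\mathcal C\mu(z)=\frac{1}{\pi}\int_{\mathbb{C}}\frac{\mu(\zeta)}{z-\zeta}\,dm(\zeta)$ is the Cauchy transform. *)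

theory Defs
  imports "HOL-Probability.Essential_Supremum" "HOL-Computational_Algebra.Polynomial"
begin

definition annulus :: "real \<Rightarrow> real \<Rightarrow> complex set" where
  "annulus \<rho> R = {z. \<rho> < norm z \<and> norm z < R}"

definition esupp :: "(complex \<Rightarrow> complex) \<Rightarrow> complex set" where
  "esupp f = - \<Union>{U. open U \<and> (AE z in lebesgue. z \<in> U \<longrightarrow> f z = 0)}"

definition Linf_norm :: "(complex \<Rightarrow> complex) \<Rightarrow> ereal" where
  "Linf_norm f = esssup lebesgue (\<lambda>z. ereal (norm (f z)))"

definition cauchy_transform :: "(complex \<Rightarrow> complex) \<Rightarrow> complex \<Rightarrow> complex" where
  "cauchy_transform \<mu> z = (1 / of_real pi) * (LINT \<zeta>|lebesgue. \<mu> \<zeta> / (z - \<zeta>))"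

end

theory Submission
  imports Defs
begin

lemma complex_pair_meas[measurable]: "(\<lambda>(x::real,y::real). Complex x y) \<in> borel_measurable (lborel \<Otimes>\<^sub>M lborel)"
proof -
  have "(\<lambda>(x::real,y::real). Complex x y) = (\<lambda>p. complex_of_real (fst p) + \<i> * complex_of_real (snd p))"
    by (auto simp: complex_eq_iff)
  then show ?thesis by simp
qed

lemma lborel_complex:
  "(lborel :: complex measure) = distr (lborel \<Otimes>\<^sub>M lborel) borel (\<lambda>(x,y). Complex x y)"
proof (rule lborel_eqI)
  fix l u :: complex
  assume le: "\<And>b. b \<in> Basis \<Longrightarrow> l \<bullet> b \<le> u \<bullet> b"
  then have le1: "Re l \<le> Re u" "Im l \<le> Im u"
    using le[of 1] le[of \<i>] by (auto simp: Basis_complex_def)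
  have eq: "(\<lambda>(x,y). Complex x y) -` box l u \<inter> space (lborel \<Otimes>\<^sub>M lborel)
        = {Re l<..<Re u} \<times> {Im l<..<Im u}"
    by (auto simp: box_def Basis_complex_def space_pair_measure)
  show "emeasure (distr (lborel \<Otimes>\<^sub>M lborel) borel (\<lambda>(x,y). Complex x y)) (box l u) =
        ennreal (\<Prod>b\<in>Basis. (u - l) \<bullet> b)"
    using le1
    by (simp add: emeasure_distr eq lborel.emeasure_pair_measure_Times Basis_complex_def ennreal_mult)
qed simp

lemma sets_P: "sets (lborel \<Otimes>\<^sub>M lborel :: (real\<times>real) measure) = sets borel"
  by (metis lborel_prod sets_lborel)

lemma shear1:
  "distr (lborel \<Otimes>\<^sub>M lborel) borel (\<lambda>(x::real,y::real). (x + a*y, y)) = lborel \<Otimes>\<^sub>M lborel"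
  (is "distr ?P _ ?S = _")
proof (rule measure_eqI)
  show "sets (distr ?P borel ?S) = sets ?P" by (simp only: sets_distr sets_P)
  fix A assume A: "A \<in> sets (distr ?P borel ?S)"
  then have Ab[measurable]: "A \<in> sets borel" by simp
  have AP[measurable]: "A \<in> sets ?P" using Ab by (simp only: sets_P)
  have SM[measurable]: "?S \<in> ?P \<rightarrow>\<^sub>M borel" by measurable
  have "emeasure (distr ?P borel ?S) A = (\<integral>\<^sup>+x. indicator A x \<partial>(distr ?P borel ?S))"
    using A by simp
  also have "\<dots> = (\<integral>\<^sup>+p. indicator A (?S p) \<partial>?P)"
    by (rule nn_integral_distr) (simp_all add: SM)
  also have "\<dots> = (\<integral>\<^sup>+y. (\<integral>\<^sup>+x. indicator A (x + a*y, y) \<partial>lborel) \<partial>lborel)"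
    by (subst lborel_pair.nn_integral_snd[symmetric]) auto
  also have "\<dots> = (\<integral>\<^sup>+y. (\<integral>\<^sup>+x. indicator A (x, y) \<partial>lborel) \<partial>lborel)"
  proof (rule nn_integral_cong)
    fix y :: real
    have [measurable]: "(\<lambda>x. indicator A (x, y) :: ennreal) \<in> borel_measurable borel" by measurable
    show "(\<integral>\<^sup>+x. indicator A (x + a*y, y) \<partial>lborel) = (\<integral>\<^sup>+x. indicator A (x, y) \<partial>lborel)"
      using nn_integral_real_affine[of "\<lambda>x. indicator A (x, y) :: ennreal" 1 "a*y"]
      by (simp add: add.commute)
  qed
  also have "\<dots> = emeasure ?P A"
    using AP by (subst lborel_pair.nn_integral_snd) auto
  finally show "emeasure (distr ?P borel ?S) A = emeasure ?P A" .
qed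

lemma shear2:
  "distr (lborel \<Otimes>\<^sub>M lborel) borel (\<lambda>(x::real,y::real). (x, y + b*x)) = lborel \<Otimes>\<^sub>M lborel"
  (is "distr ?P _ ?S = _")
proof (rule measure_eqI)
  show "sets (distr ?P borel ?S) = sets ?P" by (simp only: sets_distr sets_P)
  fix A assume A: "A \<in> sets (distr ?P borel ?S)"
  then have Ab[measurable]: "A \<in> sets borel" by simp
  have AP[measurable]: "A \<in> sets ?P" using Ab by (simp only: sets_P)
  have SM[measurable]: "?S \<in> ?P \<rightarrow>\<^sub>M borel" by measurable
  have "emeasure (distr ?P borel ?S) A = (\<integral>\<^sup>+x. indicator A x \<partial>(distr ?P borel ?S))"
    using A by simp
  also have "\<dots> = (\<integral>\<^sup>+p. indicator A (?S p) \<partial>?P)"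
    by (rule nn_integral_distr) (simp_all add: SM)
  also have "\<dots> = (\<integral>\<^sup>+x. (\<integral>\<^sup>+y. indicator A (x, y + b*x) \<partial>lborel) \<partial>lborel)"
    by (subst lborel.nn_integral_fst[symmetric]) auto
  also have "\<dots> = (\<integral>\<^sup>+x. (\<integral>\<^sup>+y. indicator A (x, y) \<partial>lborel) \<partial>lborel)"
  proof (rule nn_integral_cong)
    fix x :: real
    have [measurable]: "(\<lambda>y. indicator A (x, y) :: ennreal) \<in> borel_measurable borel" by measurable
    show "(\<integral>\<^sup>+y. indicator A (x, y + b*x) \<partial>lborel) = (\<integral>\<^sup>+y. indicator A (x, y) \<partial>lborel)"
      using nn_integral_real_affine[of "\<lambda>y. indicator A (x, y) :: ennreal" 1 "b*x"]
      by (simp add: add.commute)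
  qed
  also have "\<dots> = emeasure ?P A"
    using AP by (subst lborel.nn_integral_fst) auto
  finally show "emeasure (distr ?P borel ?S) A = emeasure ?P A" .
qed

definition "S1 = (\<lambda>(x::real,y::real). (x + (-1/2)*y, y))"
definition "S2 = (\<lambda>(x::real,y::real). (x, y + (4/5)*x))"
definition "uu = Complex (3/5) (4/5)"

lemma S1m[measurable]: "S1 \<in> borel_measurable borel"
  unfolding S1_def by (intro borel_measurable_continuous_onI) (auto intro!: continuous_intros simp: case_prod_beta')
lemma S2m[measurable]: "S2 \<in> borel_measurable borel"
  unfolding S2_def by (intro borel_measurable_continuous_onI) (auto intro!: continuous_intros simp: case_prod_beta')
lemma S1P[measurable]: "S1 \<in> borel_measurable (lborel \<Otimes>\<^sub>M lborel)"
  unfolding S1_def by measurable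
lemma S2P[measurable]: "S2 \<in> borel_measurable (lborel \<Otimes>\<^sub>M lborel)"
  unfolding S2_def by measurable

lemma rot_lborel: "distr lborel borel (\<lambda>z::complex. uu * z) = lborel"
proof -
  let ?P = "lborel \<Otimes>\<^sub>M lborel :: (real\<times>real) measure"
  let ?F = "\<lambda>(x::real,y::real). Complex x y"
  have eq: "(\<lambda>z. uu * z) \<circ> ?F = ?F \<circ> (S1 \<circ> (S2 \<circ> S1))"
    by (auto simp: fun_eq_iff complex_eq_iff uu_def S1_def S2_def field_simps)
  have d1: "distr ?P borel S1 = ?P" using shear1[of "-1/2"] by (simp add: S1_def)
  have d2: "distr ?P borel S2 = ?P" using shear2[of "4/5"] by (simp add: S2_def)
  have dT: "distr ?P borel (S1 \<circ> (S2 \<circ> S1)) = ?P"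
  proof -
    have "distr ?P borel (S2 \<circ> S1) = distr (distr ?P borel S1) borel S2"
      by (rule distr_distr[symmetric]) auto
    also have "\<dots> = ?P" by (simp add: d1 d2)
    finally have a: "distr ?P borel (S2 \<circ> S1) = ?P" .
    have "distr ?P borel (S1 \<circ> (S2 \<circ> S1)) = distr (distr ?P borel (S2 \<circ> S1)) borel S1"
      by (rule distr_distr[symmetric]) auto
    also have "\<dots> = ?P" by (simp add: a d1)
    finally show ?thesis .
  qed
  have Fm: "?F \<in> borel_measurable borel"
  proof -
    have "?F = (\<lambda>p. complex_of_real (fst p) + \<i> * complex_of_real (snd p))"
      by (auto simp: complex_eq_iff)
    then show ?thesis by (auto intro!: borel_measurable_continuous_onI continuous_intros)
  qed
  have "distr lborel borel (\<lambda>z::complex. uu * z) = distr (distr ?P borel ?F) borel (\<lambda>z. uu * z)"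
    by (subst lborel_complex) simp
  also have "\<dots> = distr ?P borel ((\<lambda>z. uu * z) \<circ> ?F)"
    by (rule distr_distr) auto
  also have "\<dots> = distr ?P borel (?F \<circ> (S1 \<circ> (S2 \<circ> S1)))" by (simp only: eq)
  also have "\<dots> = distr (distr ?P borel (S1 \<circ> (S2 \<circ> S1))) borel ?F"
    by (rule distr_distr[symmetric]) (auto simp: Fm)
  also have "\<dots> = lborel" by (simp only: dT lborel_complex[symmetric])
  finally show ?thesis .
qed

lemma gauss_pow: "k > 0 \<Longrightarrow> \<exists>a b::int. Complex 3 4 ^ k = Complex (of_int a) (of_int b) \<and> a mod 5 = 3 \<and> b mod 5 = 4"
proof (induction k)
  case 0 then show ?case by simp
next
  case (Suc k)
  show ?case
  proof (cases "k = 0")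
    case True then show ?thesis by (intro exI[of _ 3] exI[of _ 4]) simp
  next
    case False
    then obtain a b :: int where ab: "Complex 3 4 ^ k = Complex (of_int a) (of_int b)" "a mod 5 = 3" "b mod 5 = 4"
      using Suc by auto
    show ?thesis
    proof (rule exI[of _ "3*a - 4*b"], rule exI[of _ "4*a + 3*b"], intro conjI)
      show "Complex 3 4 ^ Suc k = Complex (of_int (3*a - 4*b)) (of_int (4*a + 3*b))"
        using ab(1) by (simp add: complex_eq_iff algebra_simps)
      show "(3*a - 4*b) mod 5 = 3" using ab(2,3) by (simp add: mod_diff_eq[symmetric] mod_mult_right_eq[symmetric])
      show "(4*a + 3*b) mod 5 = 4" using ab(2,3) by (simp add: mod_add_eq[symmetric] mod_mult_right_eq[symmetric])
    qed
  qed
qed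

lemma uu_pow_ne1: "k > 0 \<Longrightarrow> uu ^ k \<noteq> 1"
proof
  assume k: "k > 0" and e: "uu ^ k = 1"
  obtain a b :: int where ab: "Complex 3 4 ^ k = Complex (of_int a) (of_int b)" "b mod 5 = 4"
    using gauss_pow[OF k] by auto
  have h: "Complex 3 4 = 5 * uu" by (simp add: uu_def complex_eq_iff)
  have "Complex 3 4 ^ k = 5 ^ k" unfolding h power_mult_distrib e by simp
  then have "Im (Complex 3 4 ^ k) = 0" by (metis Im_complex_of_real of_real_numeral of_real_power)
  then have "b = 0" using ab(1) by simp
  with ab(2) show False by simp
qed

lemma uu_w1: "n \<noteq> k \<Longrightarrow> cnj uu ^ n * uu ^ k \<noteq> 1"
proof
  assume nk: "n \<noteq> k" and e: "cnj uu ^ n * uu ^ k = 1"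
  have c1: "cnj uu * uu = 1" by (simp add: uu_def complex_eq_iff)
  have "uu ^ n = uu ^ n * (cnj uu ^ n * uu ^ k)" using e by simp
  also have "\<dots> = (cnj uu * uu) ^ n * uu ^ k" by (simp add: power_mult_distrib mult_ac)
  also have "\<dots> = uu ^ k" using c1 by simp
  finally have eq: "uu ^ n = uu ^ k" .
  have u0: "uu \<noteq> 0" by (simp add: uu_def complex_eq_iff)
  show False
  proof (cases "n < k")
    case True
    then have "uu ^ k = uu ^ n * uu ^ (k - n)" by (simp add: power_add[symmetric])
    then have "uu ^ (k - n) = 1" using eq u0 by simp
    with uu_pow_ne1[of "k - n"] True show False by simp
  next
    case False
    then have "k < n" using nk by simp
    then have "uu ^ n = uu ^ k * uu ^ (n - k)" by (simp add: power_add[symmetric])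
    then have "uu ^ (n - k) = 1" using eq u0 by simp
    with uu_pow_ne1[of "n - k"] \<open>k < n\<close> show False by simp
  qed
qed

lemma uu_w2: "cnj uu ^ n / uu \<noteq> 1"
proof
  assume e: "cnj uu ^ n / uu = 1"
  have c1: "cnj uu * uu = 1" by (simp add: uu_def complex_eq_iff)
  have u0: "uu \<noteq> 0" by (simp add: uu_def complex_eq_iff)
  have "cnj uu ^ n = uu" using e u0 by (simp add: divide_eq_1_iff)
  then have "uu ^ n * cnj uu ^ n = uu ^ n * uu" by simp
  also have "uu ^ n * cnj uu ^ n = (cnj uu * uu) ^ n" by (simp add: power_mult_distrib mult_ac)
  finally have "uu ^ Suc n = 1" using c1 by (simp add: mult_ac)
  with uu_pow_ne1[of "Suc n"] show False by simp
qed

lemma uu_norm: "norm uu = 1"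
  by (simp add: uu_def cmod_def power2_eq_square)
lemma uu_cnj: "cnj uu * uu = 1" "uu \<noteq> 0"
  by (simp_all add: uu_def complex_eq_iff)

lemma integral_rot:
  fixes g :: "complex \<Rightarrow> complex"
  assumes g[measurable]: "g \<in> borel_measurable borel"
  shows "integral\<^sup>L lebesgue (\<lambda>z. g (uu * z)) = integral\<^sup>L lebesgue g"
proof -
  have gl: "g \<in> borel_measurable lborel" by simp
  have gr: "(\<lambda>z. g (uu * z)) \<in> borel_measurable lborel" by measurable
  have "integral\<^sup>L lebesgue g = integral\<^sup>L lborel g" by (rule integral_completion[OF gl])
  also have "\<dots> = integral\<^sup>L (distr lborel borel (\<lambda>z::complex. uu * z)) g" by (simp only: rot_lborel)
  also have "\<dots> = integral\<^sup>L lborel (\<lambda>z. g (uu * z))" by (rule integral_distr) auto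
  also have "\<dots> = integral\<^sup>L lebesgue (\<lambda>z. g (uu * z))" by (rule integral_completion[OF gr, symmetric])
  finally show ?thesis ..
qed

lemma integral_orth:
  fixes g :: "complex \<Rightarrow> complex"
  assumes g: "g \<in> borel_measurable borel" and eq: "\<And>z. g (uu * z) = w * g z" and w: "w \<noteq> 1"
  shows "integral\<^sup>L lebesgue g = 0"
proof -
  have "integral\<^sup>L lebesgue g = integral\<^sup>L lebesgue (\<lambda>z. w * g z)"
    using integral_rot[OF g] eq by simp
  also have "\<dots> = w * integral\<^sup>L lebesgue g" by simp
  finally have "(1 - w) * integral\<^sup>L lebesgue g = 0" by (simp add: algebra_simps)
  with w show ?thesis by simp
qed



lemma borel_leb: "f \<in> borel_measurable borel \<Longrightarrow> f \<in> borel_measurable lebesgue"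
proof -
  assume "f \<in> borel_measurable borel"
  then have "f \<in> borel_measurable lborel" using measurable_cong_sets[OF sets_lborel refl, of borel] by simp
  then show ?thesis by (rule measurable_completion)
qed
lemma cnj_meas[measurable]: "cnj \<in> borel_measurable borel"
  by (rule borel_measurable_continuous_onI) (simp add: continuous_on_cnj)

lemma Linf_AE: "Linf_norm f \<le> ereal B \<Longrightarrow> AE z in lebesgue. norm (f z) \<le> B"
proof -
  assume a: "Linf_norm f \<le> ereal B"
  have "AE z in lebesgue. ereal (norm (f z)) \<le> Linf_norm f"
    unfolding Linf_norm_def by (rule esssup_AE)
  then show ?thesis by eventually_elim (metis a ereal_less_eq(3) order_trans)
qed

lemma esupp_AE: "AE z in lebesgue. z \<notin> esupp f \<longrightarrow> f z = 0"
proof -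
  let ?F = "{U. open U \<and> (AE z in lebesgue. z \<in> U \<longrightarrow> f z = 0)}"
  obtain F' where F': "F' \<subseteq> ?F" "countable F'" "\<Union>F' = \<Union>?F"
    using Lindelof[of ?F] by auto
  have "AE z in lebesgue. \<forall>U\<in>F'. z \<in> U \<longrightarrow> f z = 0"
    using F'(1,2) by (subst AE_ball_countable) auto
  then show ?thesis
  proof eventually_elim
    case (elim z)
    show ?case
    proof
      assume "z \<notin> esupp f"
      then have "z \<in> \<Union>F'" unfolding esupp_def F'(3) by blast
      then show "f z = 0" using elim by auto
    qed
  qed
qed

lemma int_bound:
  fixes g :: "complex \<Rightarrow> 'b::{banach, second_countable_topology}"
  assumes g: "g \<in> borel_measurable lebesgue" and S: "S \<in> sets lebesgue" "emeasure lebesgue S < \<infinity>"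
    and bd: "AE z in lebesgue. norm (g z) \<le> B * indicator S z"
  shows "integrable lebesgue g" "integral\<^sup>L lebesgue (\<lambda>z. norm (g z)) \<le> B * measure lebesgue S"
    "norm (integral\<^sup>L lebesgue g) \<le> B * measure lebesgue S"
proof -
  have iS: "integrable lebesgue (\<lambda>z. B * indicator S z :: real)"
    using S by (intro integrable_mult_right) auto
  show ig: "integrable lebesgue g"
    by (rule Bochner_Integration.integrable_bound[OF iS g]) (use bd in \<open>eventually_elim, auto simp: indicator_def\<close>)
  have "integral\<^sup>L lebesgue (\<lambda>z. norm (g z)) \<le> integral\<^sup>L lebesgue (\<lambda>z. B * indicator S z :: real)"
    by (rule integral_mono_AE) (use ig iS bd in auto)
  also have "\<dots> = B * measure lebesgue S" by simp
  finally show i2: "integral\<^sup>L lebesgue (\<lambda>z. norm (g z)) \<le> B * measure lebesgue S" .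
  show "norm (integral\<^sup>L lebesgue g) \<le> B * measure lebesgue S"
    using integral_norm_bound[of lebesgue g] i2 by linarith
qed


lemma id_leb[measurable]: "(\<lambda>x::complex. x) \<in> borel_measurable lebesgue"
  using id_borel_measurable_lebesgue by (simp add: id_def)
lemma const_leb[measurable]: "(\<lambda>x::complex. c::complex) \<in> borel_measurable lebesgue"
  by simp
lemma pow_leb[measurable]: "(\<lambda>z::complex. z^k) \<in> borel_measurable lebesgue" by (rule borel_leb) measurable

lemma ball_fin: "ball (0::complex) c \<in> sets lebesgue" "emeasure lebesgue (ball (0::complex) c) < \<infinity>"
  using emeasure_lborel_ball_finite[of "0::complex" c] by (simp_all add: emeasure_completion)

lemma div_le1: "1 < norm (z::complex) \<Longrightarrow> norm (y::complex) / norm z \<le> norm y"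
  using mult_left_mono[of 1 "norm z" "norm y"] by (simp add: divide_le_eq)
lemma cauchy_series:
  fixes f :: "complex \<Rightarrow> complex" and z :: complex
  assumes f[measurable]: "f \<in> borel_measurable lebesgue" and M: "0 \<le> M" and c: "0 \<le> c" "c < 1"
    and bd: "AE \<zeta> in lebesgue. norm (f \<zeta>) \<le> M * indicator (ball 0 c) \<zeta>" and z: "1 < norm z"
  shows "(\<lambda>k. (LINT \<zeta>|lebesgue. f \<zeta> * \<zeta>^k) / z^Suc k) sums (LINT \<zeta>|lebesgue. f \<zeta> / (z - \<zeta>))"
proof -
  define g where "g = (\<lambda>k \<zeta>. f \<zeta> / z * (\<zeta> / z)^k)"
  let ?B = "measure lebesgue (ball (0::complex) c)"
  have z0: "z \<noteq> 0" using z by auto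
  have gm[measurable]: "g k \<in> borel_measurable lebesgue" for k unfolding g_def by measurable
  have gb: "AE \<zeta> in lebesgue. norm (g k \<zeta>) \<le> (M * c^k) * indicator (ball 0 c) \<zeta>" for k
    using bd
  proof eventually_elim
    case (elim \<zeta>)
    show ?case
    proof (cases "\<zeta> \<in> ball 0 c")
      case True
      have n1: "norm (f \<zeta>) \<le> M" using elim True by simp
      have n2: "norm (\<zeta> / z) ^ k \<le> c ^ k"
      proof (rule power_mono)
        have "norm (\<zeta> / z) = norm \<zeta> / norm z" by (simp add: norm_divide)
        also have "\<dots> \<le> norm \<zeta>" using z by (rule div_le1)
        also have "\<dots> \<le> c" using True by simp
        finally show "norm (\<zeta> / z) \<le> c" .
      qed simp
      have n3: "norm (f \<zeta> / z) \<le> M"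
      proof -
        have "norm (f \<zeta> / z) = norm (f \<zeta>) / norm z" by (simp add: norm_divide)
        also have "\<dots> \<le> norm (f \<zeta>)" using z by (rule div_le1)
        finally show ?thesis using n1 by simp
      qed
      have "norm (g k \<zeta>) = norm (f \<zeta> / z) * norm (\<zeta> / z) ^ k"
        unfolding g_def norm_mult norm_power ..
      also have "\<dots> \<le> M * c ^ k" by (rule mult_mono[OF n3 n2]) (use M in auto)
      finally show ?thesis using True by simp
    next
      case False
      then show ?thesis using elim by (simp add: g_def)
    qed
  qed
  have ig: "integrable lebesgue (g k)" for k
    by (rule int_bound(1)[OF gm ball_fin gb])
  have ign: "integral\<^sup>L lebesgue (\<lambda>\<zeta>. norm (g k \<zeta>)) \<le> (M * c^k) * ?B" for k
    by (rule int_bound(2)[OF gm ball_fin gb])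
  have sum1: "AE \<zeta> in lebesgue. summable (\<lambda>k. norm (g k \<zeta>)) \<and> (\<lambda>k. g k \<zeta>) sums (f \<zeta> / (z - \<zeta>))"
    using bd
  proof eventually_elim
    case (elim \<zeta>)
    show ?case
    proof (cases "\<zeta> \<in> ball 0 c")
      case True
      have lt: "norm (\<zeta> / z) < 1"
      proof -
        have "norm (\<zeta> / z) = norm \<zeta> / norm z" by (simp add: norm_divide)
        also have "\<dots> \<le> norm \<zeta>" using z by (rule div_le1)
        also have "\<dots> < 1" using True c by simp
        finally show ?thesis .
      qed
      have s1: "summable (\<lambda>k. norm (g k \<zeta>))"
        unfolding g_def norm_mult norm_power
        by (intro summable_mult summable_geometric) (use lt in simp)
      have "(\<lambda>k. (\<zeta> / z)^k) sums (1 / (1 - \<zeta> / z))" by (rule geometric_sums[OF lt])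
      then have "(\<lambda>k. f \<zeta> / z * (\<zeta> / z)^k) sums (f \<zeta> / z * (1 / (1 - \<zeta> / z)))"
        by (rule sums_mult)
      moreover have "f \<zeta> / z * (1 / (1 - \<zeta> / z)) = f \<zeta> / (z - \<zeta>)"
        using z0 lt by (auto simp: field_simps)
      ultimately have "(\<lambda>k. f \<zeta> / z * (\<zeta> / z)^k) sums (f \<zeta> / (z - \<zeta>))" by metis
      then show ?thesis using s1 unfolding g_def by blast
    next
      case False
      then show ?thesis using elim by (simp add: g_def)
    qed
  qed
  have sumI: "summable (\<lambda>k. integral\<^sup>L lebesgue (\<lambda>\<zeta>. norm (g k \<zeta>)))"
  proof (rule summable_comparison_test')
    show "summable (\<lambda>k. (M * ?B) * c^k)" by (intro summable_mult summable_geometric) (use c in simp)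
    show "norm (integral\<^sup>L lebesgue (\<lambda>\<zeta>. norm (g k \<zeta>))) \<le> (M * ?B) * c^k" for k
      using ign[of k] by (simp add: integral_nonneg_AE mult_ac)
  qed
  have "(\<lambda>k. integral\<^sup>L lebesgue (g k)) sums (LINT \<zeta>|lebesgue. (\<Sum>k. g k \<zeta>))"
    by (rule sums_integral[OF ig]) (use sum1 sumI in auto)
  moreover have "(LINT \<zeta>|lebesgue. (\<Sum>k. g k \<zeta>)) = (LINT \<zeta>|lebesgue. f \<zeta> / (z - \<zeta>))"
    by (rule integral_cong_AE) (use sum1 in \<open>auto elim!: eventually_mono simp: sums_iff\<close>)
  moreover have "integral\<^sup>L lebesgue (g k) = (LINT \<zeta>|lebesgue. f \<zeta> * \<zeta>^k) / z^Suc k" for k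
  proof -
    have "g k = (\<lambda>\<zeta>. f \<zeta> * \<zeta>^k / z^Suc k)"
      by (auto simp: g_def fun_eq_iff power_divide)
    then show ?thesis by simp
  qed
  ultimately show ?thesis by simp
qed


theorem lemma6p7:
  fixes \<mu> :: "complex \<Rightarrow> complex" and \<rho>0 \<rho>1 r1 \<epsilon> :: real
  assumes "\<mu> \<in> borel_measurable lebesgue"
    and "Linf_norm \<mu> \<le> 1"
    and "esupp \<mu> \<subseteq> annulus \<rho>0 \<rho>1"
    and "0 < \<rho>0" and "\<rho>0 < \<rho>1" and "\<rho>1 < 1"
    and "\<rho>1 < r1" and "r1 < 1"
    and "\<epsilon> > 0"
  shows "\<exists>\<mu>' :: complex \<Rightarrow> complex. \<mu>' \<in> borel_measurable lebesgue
           \<and> esupp \<mu>' \<subseteq> annulus \<rho>0 r1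
           \<and> Linf_norm (\<lambda>z. \<mu>' z - \<mu> z) < ereal \<epsilon>
           \<and> cauchy_transform \<mu>' 0 = cauchy_transform \<mu> 0
           \<and> (\<exists>p :: complex poly. \<forall>z. norm z > 1 \<longrightarrow> cauchy_transform \<mu>' z = poly p (inverse z))"
proof -
  note \<mu>m[measurable] = assms(1)
  have H1: "AE z in lebesgue. norm (\<mu> z) \<le> 1"
    using Linf_AE[of \<mu> 1] assms(2) by (simp add: one_ereal_def)
  have H2: "AE z in lebesgue. \<mu> z \<noteq> 0 \<longrightarrow> \<rho>0 < norm z \<and> norm z < \<rho>1"
    using esupp_AE[of \<mu>] by eventually_elim (use assms(3) in \<open>auto simp: annulus_def\<close>)
  define b where "b = (\<rho>1 + r1)/2"
  define c where "c = (b + min r1 (b*b/\<rho>1))/2"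
  have bc: "\<rho>1 < b" "b < c" "c < r1" "\<rho>1 * c < b*b" "0 < b" "c < 1"
  proof -
    show b1: "\<rho>1 < b" using assms by (simp add: b_def)
    show b0: "0 < b" using assms b1 by simp
    have "b < b*b/\<rho>1" using b1 b0 assms by (simp add: field_simps)
    then have m: "b < min r1 (b*b/\<rho>1)" using assms by (simp add: b_def)
    then show "b < c" by (simp add: c_def)
    have aux: "\<And>M::real. b < M \<Longrightarrow> (b+M)/2 < M" by (simp add: field_simps)
    have "c < min r1 (b*b/\<rho>1)" using aux[OF m] by (simp only: c_def)
    then show "c < r1" "\<rho>1 * c < b*b" using assms by (auto simp: field_simps)
    then show "c < 1" using assms by simp
  qed
  define A where "A = annulus b c"
  have A_open: "open A" unfolding A_def annulus_def
    by (intro open_Collect_conj open_Collect_less continuous_intros)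
  have A_ball: "A \<subseteq> ball 0 c" by (auto simp: A_def annulus_def)
  have A_sets: "A \<in> sets lebesgue" "emeasure lebesgue A < \<infinity>"
  proof -
    show As: "A \<in> sets lebesgue" by (metis A_open borel_open sets_completionI_sets sets_lborel)
    have "emeasure lebesgue A \<le> emeasure lebesgue (ball (0::complex) c)"
      by (rule emeasure_mono[OF A_ball ball_fin(1)])
    then show "emeasure lebesgue A < \<infinity>" using ball_fin(2)[of c] by (meson le_less_trans)
  qed
  have A_rot: "uu * z \<in> A \<longleftrightarrow> z \<in> A" for z
    by (simp add: A_def annulus_def norm_mult uu_norm)
  define L where "L = measure lebesgue (ball (0::complex) 1)"
  define lA where "lA = measure lebesgue A"
  have lA_pos: "0 < lA"
  proof -
    define w where "w = complex_of_real ((b+c)/2)"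
    have sub: "ball w ((c-b)/2) \<subseteq> A"
    proof
      fix z assume z: "z \<in> ball w ((c-b)/2)"
      have nw: "norm w = (b+c)/2" using bc unfolding w_def norm_of_real by simp
      have "norm w - dist w z \<le> norm z" "norm z \<le> norm w + dist w z"
        using norm_triangle_ineq2[of w z] norm_triangle_ineq2[of z w]
        by (auto simp: dist_norm norm_minus_commute)
      moreover have "dist w z < (c-b)/2" using z by simp
      ultimately have ff: "norm w - dist w z \<le> norm z" "norm z \<le> norm w + dist w z" "dist w z < (c-b)/2"
        by auto
      have "b < norm z" using ff nw by (simp add: field_simps)
      moreover have "norm z < c" using ff nw by (simp add: field_simps)
      ultimately have "b < norm z \<and> norm z < c" by simp
      then show "z \<in> A" by (simp add: A_def annulus_def)
    qed
    have "0 < measure lborel (ball w ((c-b)/2))" using content_ball_pos[of "(c-b)/2" w] bc by simp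
    also have "\<dots> = measure lebesgue (ball w ((c-b)/2))" by simp
    also have "\<dots> \<le> lA" unfolding lA_def
      by (rule measure_mono_fmeasurable[OF sub]) (use A_sets in \<open>auto simp: fmeasurable_def\<close>)
    finally show ?thesis .
  qed
  define K where "K = L / lA"
  define p where "p = \<rho>1 * c / (b*b)"
  define s where "s = sqrt p"
  have p01: "0 < p" "p < 1" using bc assms by (simp_all add: p_def field_simps)
  have s01: "0 < s" "s < 1" using p01 by (simp_all add: s_def)
  define G where "G = (\<lambda>n::nat. K * s^n / (1 - s))"
  have "(\<lambda>n. K * s^n / (1 - s)) \<longlonglongrightarrow> K * 0 / (1 - s)"
    by (intro tendsto_intros LIMSEQ_power_zero) (use s01 in auto)
  then have "eventually (\<lambda>n. G n < \<epsilon>) sequentially"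
    using assms(9) unfolding G_def by (intro order_tendstoD(2)) auto
  then obtain N where N: "G N < \<epsilon>" by (auto simp: eventually_sequentially)
  define m where "m = (\<lambda>k. LINT z|lebesgue. \<mu> z * z^k)"
  define I where "I = (\<lambda>k. LINT z|lebesgue. indicator A z * (cnj z ^ k * z ^ k))"
  define d where "d = (\<lambda>k. if N \<le> k then m k / I k else 0)"
  define \<nu> where "\<nu> = (\<lambda>z. - (indicator A z * (\<Sum>k. d k * cnj z ^ k)))"
  define \<mu>' where "\<mu>' = (\<lambda>z. \<mu> z + \<nu> z)"
  have L0: "0 \<le> L" by (simp add: L_def)
  have K0: "0 \<le> K" using L0 lA_pos by (simp add: K_def)
  have mu_bd: "AE z in lebesgue. norm (\<mu> z * z^k) \<le> \<rho>1^k * indicator (ball 0 1) z" for k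
    using H1 H2
  proof eventually_elim
    case (elim z)
    show ?case
    proof (cases "\<mu> z = 0")
      case True then show ?thesis using assms by simp
    next
      case False
      then have z: "norm z < \<rho>1" using elim by auto
      have "norm (\<mu> z * z^k) = norm (\<mu> z) * norm z ^ k" by (simp add: norm_mult norm_power)
      also have "\<dots> \<le> 1 * \<rho>1 ^ k"
        by (intro mult_mono power_mono) (use elim z in auto)
      finally show ?thesis using z assms by simp
    qed
  qed
  have m_int: "integrable lebesgue (\<lambda>z. \<mu> z * z^k)" for k
    by (rule int_bound(1)[OF _ ball_fin mu_bd]) measurable
  have m_bd: "norm (m k) \<le> \<rho>1^k * L" for k
    unfolding m_def L_def by (rule int_bound(3)[OF _ ball_fin mu_bd]) measurable
  have Ar_bd: "norm (indicator A z * norm z ^ (2*k)) \<le> c^(2*k) * indicator A z" for z k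
  proof (cases "z \<in> A")
    case True
    then have "norm z \<le> c" using A_ball by auto
    then have "norm z ^ (2*k) \<le> c^(2*k)" by (intro power_mono) auto
    then show ?thesis using True by simp
  qed simp
  have Ar_m[measurable]: "(\<lambda>z. indicator A z * norm z ^ (2*k) :: real) \<in> borel_measurable lebesgue" for k
    using A_sets(1) by measurable
  have Ir_int: "integrable lebesgue (\<lambda>z. indicator A z * norm z ^ (2*k) :: real)" for k
    by (rule int_bound(1)[OF Ar_m A_sets]) (use Ar_bd in auto)
  have I_eq: "I k = complex_of_real (LINT z|lebesgue. indicator A z * norm z ^ (2*k))" for k
  proof -
    have "indicator A z * (cnj z ^ k * z ^ k) = complex_of_real (indicator A z * norm z ^ (2*k))" for z :: complex
    proof -
      have "cnj z ^ k * z ^ k = (z * cnj z) ^ k" by (simp add: power_mult_distrib mult.commute)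
      also have "\<dots> = complex_of_real ((norm z ^ 2) ^ k)" by (metis complex_norm_square of_real_power)
      also have "\<dots> = complex_of_real (norm z ^ (2*k))" by (simp add: power_mult)
      finally show ?thesis by (simp add: indicator_def)
    qed
    then have "I k = (LINT z|lebesgue. complex_of_real (indicator A z * norm z ^ (2*k)))"
      unfolding I_def by presburger
    also have "\<dots> = complex_of_real (LINT z|lebesgue. indicator A z * norm z ^ (2*k))"
      by (rule integral_complex_of_real)
    finally show ?thesis .
  qed
  have I_lb: "lA * b^(2*k) \<le> norm (I k)" for k
  proof -
    have "lA * b^(2*k) = (LINT z|lebesgue. b^(2*k) * indicator A z)"
      by (simp add: lA_def)
    also have "\<dots> \<le> (LINT z|lebesgue. indicator A z * norm z ^ (2*k))"
    proof (rule integral_mono)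
      show "integrable lebesgue (\<lambda>z. b^(2*k) * indicator A z :: real)"
        using A_sets by (intro integrable_mult_right) auto
      show "integrable lebesgue (\<lambda>z. indicator A z * norm z ^ (2*k) :: real)" by (rule Ir_int)
      fix z :: complex
      show "b^(2*k) * indicator A z \<le> indicator A z * norm z ^ (2*k)"
      proof (cases "z \<in> A")
        case True
        then have "b \<le> norm z" by (auto simp: A_def annulus_def)
        then have "b^(2*k) \<le> norm z ^ (2*k)" using bc by (intro power_mono) auto
        then show ?thesis using True by simp
      qed simp
    qed
    also have "\<dots> \<le> norm (I k)" unfolding I_eq by simp
    finally show ?thesis .
  qed
  have I_pos: "0 < norm (I k)" for k
    using I_lb[of k] lA_pos bc by (meson less_le_trans mult_pos_pos zero_less_power)
  have s2: "s^2 = p" using p01 by (simp add: s_def)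
  have d_bd: "norm (d k) * c^k \<le> K * s^N * s^k" for k
  proof (cases "N \<le> k")
    case False
    then show ?thesis using K0 s01 by (simp add: d_def)
  next
    case True
    have "norm (d k) = norm (m k) / norm (I k)" using True by (simp add: d_def norm_divide)
    also have "\<dots> \<le> (\<rho>1^k * L) / (lA * b^(2*k))"
      by (rule frac_le) (use m_bd I_lb lA_pos bc L0 assms in auto)
    finally have "norm (d k) * c^k \<le> (\<rho>1^k * L) / (lA * b^(2*k)) * c^k"
      using bc by (intro mult_right_mono) auto
    also have "\<dots> = K * p^k"
    proof -
      have bb: "b^(2*k) = (b*b)^k" by (simp add: power_mult power2_eq_square)
      show ?thesis unfolding bb K_def p_def power_divide power_mult_distrib
        using lA_pos bc by (simp add: field_simps)
    qed
    also have "\<dots> = K * (s^k * s^k)"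
    proof -
      have "p^k = (s^2)^k" by (simp add: s2)
      also have "\<dots> = s^(k+k)" by (simp add: power_mult[symmetric] mult_2)
      finally show ?thesis by (simp add: power_add)
    qed
    also have "\<dots> \<le> K * (s^N * s^k)"
      using True s01 K0 by (intro mult_left_mono mult_right_mono power_decreasing) auto
    finally show ?thesis by (simp add: mult_ac)
  qed
  have A_borel[measurable]: "A \<in> sets borel" using A_open by (rule borel_open)
  have s1: "0 < 1 - s" using s01 by simp
  have dz_bd: "norm (d n * cnj z ^ n) \<le> K * s^N * s^n" if "norm z \<le> c" for z n
  proof -
    have "norm (d n * cnj z ^ n) = norm (d n) * norm z ^ n" by (simp add: norm_mult norm_power)
    also have "\<dots> \<le> norm (d n) * c ^ n" by (intro mult_left_mono power_mono) (use that in auto)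
    also have "\<dots> \<le> K * s^N * s^n" by (rule d_bd)
    finally show ?thesis .
  qed
  have gs: "(\<lambda>n. (K * s^N) * s^n) sums ((K * s^N) * (1 / (1 - s)))"
    by (intro sums_mult geometric_sums) (use s01 in simp)
  have GN: "G N = (K * s^N) * (1 / (1 - s))" by (simp add: G_def)
  have sumz: "summable (\<lambda>n. norm (d n * cnj z ^ n)) \<and> norm (\<Sum>n. d n * cnj z ^ n) \<le> G N"
    if "norm z \<le> c" for z
  proof
    show sm: "summable (\<lambda>n. norm (d n * cnj z ^ n))"
      by (rule summable_comparison_test'[OF sums_summable[OF gs], of 0]) (use dz_bd that in simp)
    have "norm (\<Sum>n. d n * cnj z ^ n) \<le> (\<Sum>n. norm (d n * cnj z ^ n))" by (rule summable_norm[OF sm])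
    also have "\<dots> \<le> (\<Sum>n. (K * s^N) * s^n)"
      by (rule suminf_le[OF _ sm sums_summable[OF gs]]) (use dz_bd that in simp)
    also have "\<dots> = G N" using gs GN by (simp add: sums_iff)
    finally show "norm (\<Sum>n. d n * cnj z ^ n) \<le> G N" .
  qed
  have GN0: "0 \<le> G N" using K0 s01 by (simp add: G_def)
  have nu_bd: "norm (\<nu> z) \<le> G N * indicator A z" for z
  proof (cases "z \<in> A")
    case True
    then have "norm z \<le> c" using A_ball by auto
    then show ?thesis using sumz[of z] True by (simp add: \<nu>_def)
  qed (simp add: \<nu>_def)
  have nu0: "\<nu> z = 0" if "z \<notin> A" for z using that by (simp add: \<nu>_def)
  have nu_m[measurable]: "\<nu> \<in> borel_measurable borel"
  proof (rule borel_measurable_LIMSEQ_metric)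
    show "(\<lambda>z. - (indicator A z * (\<Sum>k<i. d k * cnj z ^ k))) \<in> borel_measurable borel" for i
      by measurable
    fix z :: complex
    show "(\<lambda>i. - (indicator A z * (\<Sum>k<i. d k * cnj z ^ k))) \<longlonglongrightarrow> \<nu> z"
    proof (cases "z \<in> A")
      case True
      then have zc: "norm z \<le> c" using A_ball by auto
      have "summable (\<lambda>n. norm (d n * cnj z ^ n))" using sumz[OF zc] by (rule conjunct1)
      then have "summable (\<lambda>n. d n * cnj z ^ n)" by (rule summable_norm_cancel)
      then have "(\<lambda>i. \<Sum>k<i. d k * cnj z ^ k) \<longlonglongrightarrow> (\<Sum>n. d n * cnj z ^ n)"
        by (rule summable_LIMSEQ)
      then show ?thesis unfolding \<nu>_def by (intro tendsto_minus tendsto_mult_left)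
    next
      case False
      then show ?thesis by (simp add: \<nu>_def)
    qed
  qed
  have nu_ml[measurable]: "\<nu> \<in> borel_measurable lebesgue" by (rule borel_leb[OF nu_m])
  have nu_series: "(\<lambda>n. LINT z|lebesgue. -(indicator A z * (d n * cnj z ^ n)) * h z) sums (LINT z|lebesgue. \<nu> z * h z)"
    if hm[measurable]: "h \<in> borel_measurable borel" and hb: "\<And>z. z \<in> A \<Longrightarrow> norm (h z) \<le> B" for h B
  proof -
    define f where "f = (\<lambda>n z. -(indicator A z * (d n * cnj z ^ n)) * h z)"
    have fm[measurable]: "f n \<in> borel_measurable lebesgue" for n
      unfolding f_def by (rule borel_leb) measurable
    have fb: "norm (f n z) \<le> (K * s^N * s^n * B) * indicator A z" for n z
    proof (cases "z \<in> A")
      case True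
      then have zc: "norm z \<le> c" using A_ball by auto
      have B0: "0 \<le> B" using hb[OF True] norm_ge_zero order_trans by blast
      have "norm (f n z) = norm (d n * cnj z ^ n) * norm (h z)"
        using True by (simp add: f_def norm_mult)
      also have "\<dots> \<le> (K * s^N * s^n) * B"
        by (intro mult_mono dz_bd zc hb True) (use K0 s01 in auto)
      finally show ?thesis using True by simp
    qed (simp add: f_def)
    have fbA: "AE z in lebesgue. norm (f n z) \<le> (K * s^N * s^n * B) * indicator A z" for n
      using fb by simp
    have fi: "integrable lebesgue (f n)" for n by (rule int_bound(1)[OF fm A_sets fbA])
    have fin: "integral\<^sup>L lebesgue (\<lambda>z. norm (f n z)) \<le> (K * s^N * s^n * B) * lA" for n
      unfolding lA_def by (rule int_bound(2)[OF fm A_sets fbA])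
    have sumf: "summable (\<lambda>n. norm (f n z))" for z
    proof (cases "z \<in> A")
      case True
      then have zc: "norm z \<le> c" using A_ball by auto
      have "summable (\<lambda>n. norm (d n * cnj z ^ n) * norm (h z))"
        by (rule summable_mult2) (use sumz[OF zc] in auto)
      then show ?thesis using True by (simp add: f_def norm_mult)
    qed (simp add: f_def)
    have sumI: "summable (\<lambda>n. integral\<^sup>L lebesgue (\<lambda>z. norm (f n z)))"
    proof (rule summable_comparison_test'[of "\<lambda>n. (K * s^N * B * lA) * s^n" 0])
      show "summable (\<lambda>n. (K * s^N * B * lA) * s^n)"
        by (intro summable_mult summable_geometric) (use s01 in simp)
      show "norm (integral\<^sup>L lebesgue (\<lambda>z. norm (f n z))) \<le> (K * s^N * B * lA) * s^n" for n
        using fin[of n] by (simp add: integral_nonneg_AE mult_ac)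
    qed
    have "(\<lambda>n. integral\<^sup>L lebesgue (f n)) sums (LINT z|lebesgue. (\<Sum>n. f n z))"
      by (rule sums_integral[OF fi]) (use sumf sumI in auto)
    moreover have "(\<lambda>z. \<Sum>n. f n z) = (\<lambda>z. \<nu> z * h z)"
    proof
      fix z
      show "(\<Sum>n. f n z) = \<nu> z * h z"
      proof (cases "z \<in> A")
        case True
        then have zc: "norm z \<le> c" using A_ball by auto
        have "summable (\<lambda>n. norm (d n * cnj z ^ n))" using sumz[OF zc] by (rule conjunct1)
      then have "summable (\<lambda>n. d n * cnj z ^ n)" by (rule summable_norm_cancel)
        then have "(\<lambda>n. d n * cnj z ^ n) sums (\<Sum>n. d n * cnj z ^ n)" by (rule summable_sums)
        then have "(\<lambda>n. -(indicator A z * (d n * cnj z ^ n)) * h z) sums (-(indicator A z * (\<Sum>n. d n * cnj z ^ n)) * h z)"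
          by (intro sums_mult2 sums_minus sums_mult)
        then show ?thesis by (simp add: f_def \<nu>_def sums_iff)
      next
        case False
        then show ?thesis by (simp add: f_def \<nu>_def)
      qed
    qed
    ultimately show ?thesis by (simp add: f_def)
  qed
  have orth: "(LINT z|lebesgue. indicator A z * (cnj z ^ n * z ^ k)) = (if n = k then I k else 0)" for n k
  proof (cases "n = k")
    case True then show ?thesis by (simp add: I_def)
  next
    case False
    have "(LINT z|lebesgue. indicator A z * (cnj z ^ n * z ^ k)) = 0"
    proof (rule integral_orth)
      show "(\<lambda>z. indicator A z * (cnj z ^ n * z ^ k)) \<in> borel_measurable borel" by measurable
      show "indicator A (uu * z) * (cnj (uu * z) ^ n * (uu * z) ^ k) =
            (cnj uu ^ n * uu ^ k) * (indicator A z * (cnj z ^ n * z ^ k))" for z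
        by (simp add: A_rot indicator_def power_mult_distrib mult_ac)
      show "cnj uu ^ n * uu ^ k \<noteq> 1" by (rule uu_w1[OF False])
    qed
    then show ?thesis using False by simp
  qed
  have nu_mom: "(LINT z|lebesgue. \<nu> z * z^k) = - d k * I k" for k
  proof -
    have ser: "(\<lambda>n. LINT z|lebesgue. -(indicator A z * (d n * cnj z ^ n)) * z^k) sums (LINT z|lebesgue. \<nu> z * z^k)"
    proof (rule nu_series)
      show "(\<lambda>z::complex. z^k) \<in> borel_measurable borel" by measurable
      show "norm (z^k) \<le> c^k" if "z \<in> A" for z
        using that A_ball by (auto simp: norm_power intro!: power_mono)
    qed
    have "(LINT z|lebesgue. -(indicator A z * (d n * cnj z ^ n)) * z^k) = (if n = k then - d k * I k else 0)" for n
    proof -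
      have "(\<lambda>z. -(indicator A z * (d n * cnj z ^ n)) * z^k) = (\<lambda>z. (- d n) * (indicator A z * (cnj z ^ n * z ^ k)))"
        by (simp add: fun_eq_iff mult_ac)
      then show ?thesis using orth[of n k] by simp
    qed
    then have "(\<lambda>n. if n = k then - d k * I k else 0) sums (LINT z|lebesgue. \<nu> z * z^k)"
      using ser by simp
    moreover have "(\<lambda>n. if n = k then - d k * I k else 0) sums (- d k * I k)" by (rule sums_single)
    ultimately show ?thesis using sums_unique2 by blast
  qed
  have nu_int: "integrable lebesgue (\<lambda>z. \<nu> z * z^k)" for k
  proof (rule int_bound(1)[OF _ A_sets, of _ "G N * c^k"])
    show "(\<lambda>z. \<nu> z * z^k) \<in> borel_measurable lebesgue" by measurable
    have "norm (\<nu> z * z^k) \<le> G N * c^k * indicator A z" for z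
    proof (cases "z \<in> A")
      case True
      then have zc: "norm z \<le> c" using A_ball by auto
      have "norm (\<nu> z * z^k) = norm (\<nu> z) * norm z ^ k" by (simp add: norm_mult norm_power)
      also have "\<dots> \<le> G N * c^k" using nu_bd[of z] True zc GN0
        by (intro mult_mono power_mono) auto
      finally show ?thesis using True by simp
    qed (simp add: nu0)
    then show "AE z in lebesgue. norm (\<nu> z * z^k) \<le> G N * c^k * indicator A z" by simp
  qed
  have nu_C0: "(LINT z|lebesgue. \<nu> z / (0 - z)) = 0"
  proof -
    have ser: "(\<lambda>n. LINT z|lebesgue. -(indicator A z * (d n * cnj z ^ n)) * (1 / (0 - z))) sums (LINT z|lebesgue. \<nu> z * (1 / (0 - z)))"
    proof (rule nu_series)
      show "(\<lambda>z::complex. 1 / (0 - z)) \<in> borel_measurable borel" by measurable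
      show "norm (1 / (0 - z)) \<le> 1 / b" if "z \<in> A" for z
      proof -
        have "b < norm z" using that by (simp add: A_def annulus_def)
        then show ?thesis using bc by (simp add: norm_divide frac_le)
      qed
    qed
    have "(LINT z|lebesgue. -(indicator A z * (d n * cnj z ^ n)) * (1 / (0 - z))) = 0" for n
    proof (rule integral_orth)
      show "(\<lambda>z. -(indicator A z * (d n * cnj z ^ n)) * (1 / (0 - z))) \<in> borel_measurable borel"
        by measurable
      show "cnj uu ^ n / uu \<noteq> 1" by (rule uu_w2)
      fix z
      have u0: "uu \<noteq> 0" by (simp add: uu_def complex_eq_iff)
      have e1: "1 / (0 - uu * z) = (1 / uu) * (1 / (0 - z))" by (simp add: divide_simps)
      show "-(indicator A (uu * z) * (d n * cnj (uu * z) ^ n)) * (1 / (0 - uu * z)) =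
            (cnj uu ^ n / uu) * (-(indicator A z * (d n * cnj z ^ n)) * (1 / (0 - z)))"
        unfolding e1 by (simp add: indicator_def A_rot power_mult_distrib)
    qed
    then have "(\<lambda>n. 0) sums (LINT z|lebesgue. \<nu> z * (1 / (0 - z)))" using ser by simp
    then show ?thesis by (simp add: sums_iff)
  qed
  have mu'_m[measurable]: "\<mu>' \<in> borel_measurable lebesgue" unfolding \<mu>'_def by measurable
  have A_sub_b: "z \<notin> A" if "norm z < b" for z using that by (simp add: A_def annulus_def)
  have A_sub_c: "z \<notin> A" if "c \<le> norm z" for z using that by (simp add: A_def annulus_def)
  have supp: "esupp \<mu>' \<subseteq> annulus \<rho>0 r1"
  proof
    fix z assume z: "z \<in> esupp \<mu>'"
    show "z \<in> annulus \<rho>0 r1"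
    proof (rule ccontr)
      assume nz: "z \<notin> annulus \<rho>0 r1"
      have "z \<notin> esupp \<mu>'"
      proof (cases "r1 \<le> norm z")
        case True
        define U where "U = {w::complex. c < norm w}"
        have "open U" unfolding U_def by (intro open_Collect_less continuous_intros)
        moreover have "AE w in lebesgue. w \<in> U \<longrightarrow> \<mu>' w = 0"
          using H2
        proof eventually_elim
          case (elim w)
          show ?case
          proof
            assume "w \<in> U"
            then have wc: "c < norm w" by (simp add: U_def)
            then have "\<mu> w = 0" using elim bc by force
            moreover have "\<nu> w = 0" using wc A_sub_c nu0 by simp
            ultimately show "\<mu>' w = 0" by (simp add: \<mu>'_def)
          qed
        qed
        moreover have "z \<in> U" using True bc by (simp add: U_def)
        ultimately show ?thesis unfolding esupp_def by blast
      next
        case False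
        then have "norm z \<le> \<rho>0" using nz by (auto simp: annulus_def)
        then have "z \<notin> annulus \<rho>0 \<rho>1" by (simp add: annulus_def)
        then have "z \<notin> esupp \<mu>" using assms(3) by blast
        then obtain U where U: "open U" "AE w in lebesgue. w \<in> U \<longrightarrow> \<mu> w = 0" "z \<in> U"
          unfolding esupp_def by blast
        define V where "V = U \<inter> ball 0 b"
        have "open V" using U by (simp add: V_def open_Int)
        moreover have "AE w in lebesgue. w \<in> V \<longrightarrow> \<mu>' w = 0"
          using U(2)
        proof eventually_elim
          case (elim w)
          show ?case
          proof
            assume "w \<in> V"
            then have "w \<in> U" "norm w < b" by (auto simp: V_def)
            then show "\<mu>' w = 0" using elim A_sub_b nu0 by (simp add: \<mu>'_def)
          qed
        qed
        moreover have "z \<in> V" using U(3) \<open>norm z \<le> \<rho>0\<close> bc assms by (simp add: V_def)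
        ultimately show ?thesis unfolding esupp_def by blast
      qed
      with z show False by simp
    qed
  qed
  have linf: "Linf_norm (\<lambda>z. \<mu>' z - \<mu> z) < ereal \<epsilon>"
  proof -
    have "Linf_norm (\<lambda>z. \<mu>' z - \<mu> z) = esssup lebesgue (\<lambda>z. ereal (norm (\<nu> z)))"
      by (simp add: Linf_norm_def \<mu>'_def)
    also have "\<dots> \<le> ereal (G N)"
    proof (rule esssup_I)
      show "(\<lambda>z. ereal (norm (\<nu> z))) \<in> borel_measurable lebesgue" by measurable
      have "ereal (norm (\<nu> z)) \<le> ereal (G N)" for z
        using nu_bd[of z] GN0 by (cases "z \<in> A") auto
      then show "AE z in lebesgue. ereal (norm (\<nu> z)) \<le> ereal (G N)" by simp
    qed
    also have "\<dots> < ereal \<epsilon>" using N by simp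
    finally show ?thesis .
  qed
  have mu_C0_int: "integrable lebesgue (\<lambda>z. \<mu> z / (0 - z))"
  proof (rule int_bound(1)[OF _ ball_fin, of _ "1 / \<rho>0" 1])
    show "(\<lambda>z. \<mu> z / (0 - z)) \<in> borel_measurable lebesgue" by measurable
    show "AE z in lebesgue. norm (\<mu> z / (0 - z)) \<le> 1 / \<rho>0 * indicator (ball 0 1) z"
      using H1 H2
    proof eventually_elim
      case (elim z)
      show ?case
      proof (cases "\<mu> z = 0")
        case True then show ?thesis using assms by simp
      next
        case False
        then have z: "\<rho>0 < norm z" "norm z < \<rho>1" using elim by auto
        have "norm (\<mu> z / (0 - z)) = norm (\<mu> z) / norm z" by (simp add: norm_divide)
        also have "\<dots> \<le> 1 / \<rho>0" by (rule frac_le) (use elim z assms in auto)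
        finally show ?thesis using z assms by simp
      qed
    qed
  qed
  have nu_C0_int: "integrable lebesgue (\<lambda>z. \<nu> z / (0 - z))"
  proof (rule int_bound(1)[OF _ A_sets, of _ "G N / b"])
    show "(\<lambda>z. \<nu> z / (0 - z)) \<in> borel_measurable lebesgue" by measurable
    have "norm (\<nu> z / (0 - z)) \<le> G N / b * indicator A z" for z
    proof (cases "z \<in> A")
      case True
      then have zb: "b < norm z" by (simp add: A_def annulus_def)
      have "norm (\<nu> z / (0 - z)) = norm (\<nu> z) / norm z" by (simp add: norm_divide)
      also have "\<dots> \<le> G N / b" by (rule frac_le) (use nu_bd[of z] True zb bc GN0 in auto)
      finally show ?thesis using True by simp
    qed (simp add: nu0)
    then show "AE z in lebesgue. norm (\<nu> z / (0 - z)) \<le> G N / b * indicator A z" by simp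
  qed
  have C0: "cauchy_transform \<mu>' 0 = cauchy_transform \<mu> 0"
  proof -
    have "(LINT z|lebesgue. \<mu>' z / (0 - z)) = (LINT z|lebesgue. \<mu> z / (0 - z) + \<nu> z / (0 - z))"
      by (simp add: \<mu>'_def add_divide_distrib)
    also have "\<dots> = (LINT z|lebesgue. \<mu> z / (0 - z)) + (LINT z|lebesgue. \<nu> z / (0 - z))"
      by (rule Bochner_Integration.integral_add[OF mu_C0_int nu_C0_int])
    also have "\<dots> = (LINT z|lebesgue. \<mu> z / (0 - z))" using nu_C0 by simp
    finally show ?thesis by (simp add: cauchy_transform_def)
  qed
  define m' where "m' = (\<lambda>k. LINT z|lebesgue. \<mu>' z * z^k)"
  have m'0: "m' k = 0" if "N \<le> k" for k
  proof -
    have "m' k = (LINT z|lebesgue. \<mu> z * z^k + \<nu> z * z^k)"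
      by (simp add: m'_def \<mu>'_def distrib_right)
    also have "\<dots> = m k + (LINT z|lebesgue. \<nu> z * z^k)"
      unfolding m_def by (rule Bochner_Integration.integral_add[OF m_int nu_int])
    also have "\<dots> = m k - d k * I k" by (simp add: nu_mom)
    also have "\<dots> = 0" using that I_pos[of k] by (simp add: d_def)
    finally show ?thesis .
  qed
  have mu'_bd: "AE \<zeta> in lebesgue. norm (\<mu>' \<zeta>) \<le> (1 + G N) * indicator (ball 0 c) \<zeta>"
    using H1 H2
  proof eventually_elim
    case (elim z)
    show ?case
    proof (cases "norm z < c")
      case True
      have "norm (\<mu>' z) \<le> norm (\<mu> z) + norm (\<nu> z)" unfolding \<mu>'_def by (rule norm_triangle_ineq)
      also have "\<dots> \<le> 1 + G N"
      proof (rule add_mono)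
        show "norm (\<mu> z) \<le> 1" using elim by simp
        show "norm (\<nu> z) \<le> G N" using nu_bd[of z] GN0 by (cases "z \<in> A") auto
      qed
      finally show ?thesis using True by simp
    next
      case False
      then have "\<mu> z = 0" using elim bc by force
      moreover have "\<nu> z = 0" using False A_sub_c nu0 by simp
      ultimately show ?thesis using GN0 by (simp add: \<mu>'_def)
    qed
  qed
  define P where "P = (\<Sum>k<N. monom (m' k / of_real pi) (Suc k))"
  have poly: "cauchy_transform \<mu>' z = poly P (inverse z)" if z: "norm z > 1" for z
  proof -
    have ser: "(\<lambda>k. m' k / z^Suc k) sums (LINT \<zeta>|lebesgue. \<mu>' \<zeta> / (z - \<zeta>))"
      unfolding m'_def
      by (rule cauchy_series[OF mu'_m _ _ _ mu'_bd z]) (use GN0 bc in auto)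
    have "(\<lambda>k. m' k / z^Suc k) sums (\<Sum>k<N. m' k / z^Suc k)"
      by (rule sums_finite) (use m'0 in auto)
    then have "(LINT \<zeta>|lebesgue. \<mu>' \<zeta> / (z - \<zeta>)) = (\<Sum>k<N. m' k / z^Suc k)"
      using ser sums_unique2 by blast
    then have "cauchy_transform \<mu>' z = 1 / of_real pi * (\<Sum>k<N. m' k / z^Suc k)"
      by (simp add: cauchy_transform_def)
    also have "\<dots> = (\<Sum>k<N. m' k / of_real pi * inverse z ^ Suc k)"
      by (simp add: sum_distrib_left divide_inverse power_inverse mult_ac)
    also have "\<dots> = poly P (inverse z)"
      by (simp add: P_def poly_sum poly_monom)
    finally show ?thesis .
  qed
  show ?thesis
    by (rule exI[of _ \<mu>']) (use mu'_m supp linf C0 poly in blast)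
qed

end
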